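(* Let $k\ge1$ and let $\tilde a>0$, $b>0$. Suppose $\mathbf{x}=(x_1,x_2,x_3)\in(0,\infty)^3$ solves $$x_1=\tilde a\frac{b x_3^k+1}{x_3^k+b},\qquad x_2=\tilde a\frac{(b x_2^k+1)x_3^k}{(x_3^k+b)x_1^k},\qquad x_3=\tilde a\frac{(b x_3^k+1)x_1^k}{(x_2^k+b)x_3^k}.$$ Then $x_1=x_2=x_3$ if and only if at least one of $x_1=x_2$, $x_1=x_3$, $x_2=x_3$ holds.
   Context: In the paper, $\tilde a=e^{2\beta J/k}$ and $b=e^{2\beta J_p}$. The system describes translation-invariant boundary fields for the Ising–Vannimenus model on the Cayley tree of order $k$. *)

theory Defs
  imports Complex_Main
begin

end

theory Submission
  imports Defs
begin

theorem proposition4p1: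
  fixes k :: nat and a b x1 x2 x3 :: real
  assumes "k \<ge> 1" and "a > 0" and "b > 0"
    and "x1 > 0" and "x2 > 0" and "x3 > 0"
    and "x1 = a * (b * x3 ^ k + 1) / (x3 ^ k + b)"
    and "x2 = a * ((b * x2 ^ k + 1) * x3 ^ k) / ((x3 ^ k + b) * x1 ^ k)"
    and "x3 = a * ((b * x3 ^ k + 1) * x1 ^ k) / ((x2 ^ k + b) * x3 ^ k)"
  shows "(x1 = x2 \<and> x2 = x3) \<longleftrightarrow> (x1 = x2 \<or> x1 = x3 \<or> x2 = x3)"
proof -
  define u1 where "u1 = x1 ^ k"
  define u2 where "u2 = x2 ^ k"
  define u3 where "u3 = x3 ^ k"
  have p1: "u1 > 0" "u2 > 0" "u3 > 0" using assms by (auto simp: u1_def u2_def u3_def)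
  have inj: "\<And>x y. x > 0 \<Longrightarrow> y > 0 \<Longrightarrow> x ^ k = y ^ k \<Longrightarrow> x = (y::real)"
    using assms(1) by (metis order_less_imp_le power_inject_base le_add_diff_inverse add_Suc_right plus_1_eq_Suc)
  have d1: "x3 ^ k + b \<noteq> 0" using p1 assms(3) unfolding u3_def by simp
  have d2: "(x3 ^ k + b) * x1 ^ k \<noteq> 0" using assms(3,4,6) by (smt (verit) zero_less_power mult_pos_pos)
  have d3: "(x2 ^ k + b) * x3 ^ k \<noteq> 0" using assms(3,5,6) by (smt (verit) zero_less_power mult_pos_pos)
  have e1: "x1 * (u3 + b) = a * (b * u3 + 1)"
    using assms(7) d1 unfolding u3_def by (simp add: eq_divide_eq)
  have e2: "x2 * ((u3 + b) * u1) = a * ((b * u2 + 1) * u3)"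
    using assms(8) d2 unfolding u3_def u1_def u2_def by (simp only: eq_divide_eq if_True not_False_eq_True)
  have e3: "x3 * ((u2 + b) * u3) = a * ((b * u3 + 1) * u1)"
    using assms(9) d3 unfolding u3_def u1_def u2_def by (simp only: eq_divide_eq if_True not_False_eq_True)
  have c12: "x1 = x3" if h: "x1 = x2"
  proof -
    have "u1 = u2" using h by (simp add: u1_def u2_def)
    have "x1 * (u3 + b) * u1 = a * ((b * u1 + 1) * u3)"
      using e2 h \<open>u1 = u2\<close> by (simp add: mult.assoc)
    then have "a * ((b * u3 + 1) * u1) = a * ((b * u1 + 1) * u3)"
      using e1 by (metis mult.assoc)
    then have "(b * u3 + 1) * u1 = (b * u1 + 1) * u3"
      using assms(2) by simp
    then have "u1 = u3" by (simp add: algebra_simps)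
    then show ?thesis using inj[of x1 x3] assms(4,5,6) unfolding u1_def u3_def by blast
  qed
  have c13: "x1 = x2" if h: "x1 = x3"
  proof -
    have "u1 = u3" using h by (simp add: u1_def u3_def)
    have "x1 * (u2 + b) * u1 = x1 * (u3 + b) * u1"
      using e3 e1 h \<open>u1 = u3\<close> by (simp add: mult.assoc mult.commute)
    then have "(x1 * u1) * (u2 - u3) = 0" by (simp add: algebra_simps)
    then have "u2 = u3" using p1 assms(4) by simp
    then have "x2 = x3" using inj[of x2 x3] assms(4,5,6) unfolding u2_def u3_def by blast
    then show ?thesis using h by simp
  qed
  have c23: "x1 = x2" if h: "x2 = x3"
  proof -
    have "u2 = u3" using h by (simp add: u2_def u3_def)
    define K where "K = x2 * (u2 + b)"
    define M where "M = a * (b * u2 + 1)"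
    have Kp: "K > 0" using assms(2,3,5) p1 by (simp add: K_def)
    have Mp: "M > 0" using assms(2,3,5) p1 unfolding M_def by (simp add: add_pos_pos mult_pos_pos)
    have q1: "K * u1 = M * u2" using e2 \<open>u2 = u3\<close> unfolding K_def M_def by (simp add: algebra_simps)
    have q2: "K * u2 = M * u1" using e3 h \<open>u2 = u3\<close> unfolding K_def M_def by (simp add: algebra_simps)
    have "(K + M) * (u1 - u2) = 0" using q1 q2 by (simp add: algebra_simps)
    then have "u1 = u2" using Kp Mp by simp
    then show ?thesis using inj[of x1 x2] assms(4,5,6) unfolding u1_def u2_def by blast
  qed
  show ?thesis using c12 c13 c23 by blast
qed

end
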